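(* Let $X_1,X_2,\dots$ be i.i.d. $\mathbb{Z}$-valued random variables on $(\Omega,\mathcal{F},P)$, $S_n=\sum_{j=1}^nX_j$, satisfying (A1) and (A3) below, with constants $\beta,c_*,\varepsilon$ from (A3). Then there exist $C_3>0$ and $N_3\in\mathbb{N}$ such that for all $n\ge N_3$, $$\left|n^{1/\beta}P\{S_n=0\}-\frac{1}{\beta c_*^{1/\beta}\pi}\Gamma\Big(\frac1\beta\Big)\right|\le C_3n^{-\delta},$$ where $\delta=\min\{\varepsilon/(2\beta),1/2\}$ and $\Gamma$ is the gamma function.
   Context: $\phi(\theta)=\sum_{k\in\mathbb{Z}}e^{i\theta k}P\{X_1=k\}$. (A1) For each $y\in\mathbb{Z}$, the smallest subgroup of $\mathbb{Z}$ containing $\{y+k:P\{X_1=k\}>0\}$ is $\mathbb{Z}$. (A3) There exist $\beta\in(0,2]$, $c_*>0$, $\varepsilon>0$ with $\phi(\theta)=1-c_*|\theta|^\beta+O(|\theta|^{\beta+\varepsilon})$ as $\theta\to0$. *)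

theory Defs
  imports "HOL-Probability.Probability" "HOL-Library.Landau_Symbols"
begin

definition charfn :: "'a measure \<Rightarrow> ('a \<Rightarrow> int) \<Rightarrow> real \<Rightarrow> complex" where
  "charfn M Y \<theta> = (\<Sum>\<^sub>\<infinity>k\<in>(UNIV::int set). cis (\<theta> * of_int k) * complex_of_real (measure M {\<omega>\<in>space M. Y \<omega> = k}))"

definition int_subgroup_gen :: "int set \<Rightarrow> int set" where
  "int_subgroup_gen A = \<Inter>{G. 0 \<in> G \<and> (\<forall>a\<in>G. \<forall>b\<in>G. a - b \<in> G) \<and> A \<subseteq> G}"

end

theory Submission
  imports Defs "HOL-Real_Asymp.Real_Asymp"
begin

locale lclt = prob_space M for M :: "'a measure" +
  fixes X :: "nat \<Rightarrow> 'a \<Rightarrow> int"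
  assumes Xmeas: "\<And>i. X i \<in> measurable M (count_space UNIV)"
    and Xind: "indep_vars (\<lambda>_. count_space UNIV) X UNIV"
    and Xdistr: "\<And>i. distr M (count_space UNIV) (X i) = distr M (count_space UNIV) (X 0)"
begin

definition phi :: "real \<Rightarrow> complex" where
  "phi \<theta> = (\<integral>\<omega>. iexp (\<theta> * real_of_int (X 0 \<omega>)) \<partial>M)"

definition Ssum :: "nat \<Rightarrow> 'a \<Rightarrow> int" where
  "Ssum n \<omega> = (\<Sum>j<n. X j \<omega>)"

lemma Xmeas'[measurable]: "X i \<in> measurable M (count_space UNIV)"
  by (rule Xmeas)

lemma meas_int_add:
  fixes f g :: "'a \<Rightarrow> int"
  assumes [measurable]: "f \<in> measurable M (count_space UNIV)" "g \<in> measurable M (count_space UNIV)"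
  shows "(\<lambda>\<omega>. f \<omega> + g \<omega>) \<in> measurable M (count_space UNIV)"
proof -
  have "(\<lambda>\<omega>. (f \<omega>, g \<omega>)) \<in> measurable M (count_space UNIV \<Otimes>\<^sub>M count_space UNIV)"
    by measurable
  hence "(\<lambda>\<omega>. (f \<omega>, g \<omega>)) \<in> measurable M (count_space UNIV)"
    by (simp add: pair_measure_countable)
  moreover have "(\<lambda>(a::int,b). a + b) \<in> measurable (count_space UNIV) (count_space UNIV)" by simp
  ultimately have "(\<lambda>(a::int,b). a + b) \<circ> (\<lambda>\<omega>. (f \<omega>, g \<omega>)) \<in> measurable M (count_space UNIV)"
    by (rule measurable_comp)
  thus ?thesis by (simp add: o_def)
qed

lemma Ssum_meas[measurable]: "Ssum n \<in> measurable M (count_space UNIV)"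
proof (induction n)
  case 0 thus ?case by (simp add: Ssum_def)
next
  case (Suc n)
  have "Ssum (Suc n) = (\<lambda>\<omega>. Ssum n \<omega> + X n \<omega>)" by (auto simp: Ssum_def)
  thus ?case using meas_int_add[OF Suc Xmeas] by simp
qed

lemma integrable_iexp_int: "integrable M (\<lambda>\<omega>. iexp (t * real_of_int (f \<omega>)))"
  if [measurable]: "f \<in> measurable M (count_space UNIV)"
  by (rule integrable_const_bound[where B=1]) (auto simp: norm_exp_i_times)

end

context lclt begin

lemma phi_Xj: "(\<integral>\<omega>. iexp (\<theta> * real_of_int (X j \<omega>)) \<partial>M) = phi \<theta>"
proof -
  have "(\<integral>\<omega>. iexp (\<theta> * real_of_int (X j \<omega>)) \<partial>M)
      = (\<integral>k. iexp (\<theta> * real_of_int k) \<partial>distr M (count_space UNIV) (X j))"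
    by (rule integral_distr[symmetric, OF Xmeas']) simp
  also have "\<dots> = (\<integral>k. iexp (\<theta> * real_of_int k) \<partial>distr M (count_space UNIV) (X 0))"
    using Xdistr[of j] by (rule arg_cong)
  also have "\<dots> = phi \<theta>"
    unfolding phi_def by (rule integral_distr[OF Xmeas']) simp
  finally show ?thesis .
qed

lemma phi_pow: "(\<integral>\<omega>. iexp (\<theta> * real_of_int (Ssum n \<omega>)) \<partial>M) = phi \<theta> ^ n"
proof -
  have eq: "iexp (\<theta> * real_of_int (Ssum n \<omega>)) = (\<Prod>j<n. iexp (\<theta> * real_of_int (X j \<omega>)))" for \<omega>
  proof -
    have "iexp (\<theta> * real_of_int (Ssum n \<omega>)) = exp (\<Sum>j<n. \<i> * complex_of_real (\<theta> * real_of_int (X j \<omega>)))"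
      by (simp add: Ssum_def sum_distrib_left)
    also have "\<dots> = (\<Prod>j<n. iexp (\<theta> * real_of_int (X j \<omega>)))"
      by (rule exp_sum) simp
    finally show ?thesis .
  qed
  have ind: "indep_vars (\<lambda>_. borel) (\<lambda>j \<omega>. iexp (\<theta> * real_of_int (X j \<omega>))) {..<n}"
    by (rule indep_vars_compose2[where Y="\<lambda>j k. iexp (\<theta> * real_of_int k)", OF indep_vars_subset[OF Xind]]) simp_all
  have "(\<integral>\<omega>. iexp (\<theta> * real_of_int (Ssum n \<omega>)) \<partial>M)
     = (\<integral>\<omega>. (\<Prod>j<n. iexp (\<theta> * real_of_int (X j \<omega>))) \<partial>M)" by (simp only: eq)
  also have "\<dots> = (\<Prod>j<n. \<integral>\<omega>. iexp (\<theta> * real_of_int (X j \<omega>)) \<partial>M)"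
    by (rule indep_vars_lebesgue_integral[OF _ ind]) (use integrable_iexp_int[OF Xmeas'] in auto)
  also have "\<dots> = phi \<theta> ^ n" by (simp only: phi_Xj prod_constant card_lessThan)
  finally show ?thesis .
qed
end

lemma iexp_scaled_deriv:
  "((\<lambda>x. iexp (x * c)) has_vector_derivative (c *\<^sub>R (\<i> * iexp (x * c)))) (at x within S)"
proof -
  have "((\<lambda>x. x * c) has_real_derivative c) (at x within S)"
    by (auto intro!: derivative_eq_intros)
  hence d: "((\<lambda>x. x * c) has_vector_derivative c) (at x within S)"
    by (simp add: has_real_derivative_iff_has_vector_derivative)
  show ?thesis
    using vector_diff_chain_within[OF d has_vector_derivative_iexp] by (simp add: o_def)
qed

lemma inner_iexp:
  fixes k :: int
  shows "(\<integral>\<theta>. indicator {-pi..pi} \<theta> *\<^sub>R iexp (\<theta> * real_of_int k) \<partial>lborel) = (if k = 0 then complex_of_real (2*pi) else 0)"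
proof (cases "k = 0")
  case True
  have "(\<integral>\<theta>. indicator {-pi..pi} \<theta> *\<^sub>R iexp (\<theta> * real_of_int k) \<partial>lborel)
      = (\<integral>\<theta>. indicator {-pi..pi} \<theta> \<partial>lborel) *\<^sub>R (1::complex)"
    using True by (simp add: integral_scaleR_left[symmetric])
  also have "\<dots> = complex_of_real (2*pi)" by (simp add: scaleR_conv_of_real)
  finally show ?thesis using True by simp
next
  case False
  have kr: "real_of_int k \<noteq> 0" using False by simp
  have "(\<integral>\<theta>. indicator {-pi..pi} \<theta> *\<^sub>R iexp (\<theta> * real_of_int k) \<partial>lborel)
      = (CLBINT \<theta>=-pi..pi. iexp (\<theta> * real_of_int k))"
    by (simp add: interval_integral_Icc set_lebesgue_integral_def)
  also have "\<dots> = (-\<i> / of_int k) * iexp (pi * real_of_int k) - (-\<i> / of_int k) * iexp (-pi * real_of_int k)"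
  proof (rule interval_integral_FTC_finite)
    show "continuous_on {min (- pi) pi..max (- pi) pi} (\<lambda>\<theta>. iexp (\<theta> * real_of_int k))"
      by (intro continuous_intros)
    fix x
    have "((\<lambda>x. (-\<i> / of_int k) * iexp (x * real_of_int k)) has_vector_derivative
           ((-\<i> / of_int k) * (real_of_int k *\<^sub>R (\<i> * iexp (x * real_of_int k)))))
          (at x within {min (- pi) pi..max (- pi) pi})"
      by (rule has_vector_derivative_mult_right[OF iexp_scaled_deriv])
    moreover have "(-\<i> / of_int k) * (real_of_int k *\<^sub>R (\<i> * iexp (x * real_of_int k))) = iexp (x * real_of_int k)"
      using kr by (simp add: scaleR_conv_of_real field_simps)
    ultimately show "((\<lambda>x. (-\<i> / of_int k) * iexp (x * real_of_int k)) has_vector_derivative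
           iexp (x * real_of_int k)) (at x within {min (- pi) pi..max (- pi) pi})" by simp
  qed
  also have "iexp (pi * real_of_int k) = iexp (-pi * real_of_int k)"
  proof -
    have s: "sin (real_of_int k * pi) = 0" by (simp add: sin_times_pi_eq_0)
    show ?thesis unfolding cis_conv_exp[symmetric] using s
      by (simp add: cis.ctr mult.commute)
  qed
  finally show ?thesis using False by simp
qed


context lclt begin

lemma fourier:
  "complex_of_real (2*pi * prob {\<omega>\<in>space M. Ssum n \<omega> = 0})
     = (\<integral>\<theta>. indicator {-pi..pi} \<theta> *\<^sub>R phi \<theta> ^ n \<partial>lborel)"
proof -
  interpret P: pair_sigma_finite lborel M ..
  define f where "f = (\<lambda>\<theta> \<omega>. indicator {-pi..pi} \<theta> *\<^sub>R iexp (\<theta> * real_of_int (Ssum n \<omega>)))"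
  have fm[measurable]: "case_prod f \<in> borel_measurable (lborel \<Otimes>\<^sub>M M)"
    unfolding f_def by measurable
  have int: "integrable (lborel \<Otimes>\<^sub>M M) (case_prod f)"
  proof (rule P.Fubini_integrable)
    have "(\<integral>\<omega>. norm (f \<theta> \<omega>) \<partial>M) = indicator {-pi..pi} \<theta>" for \<theta>
      by (simp add: f_def norm_exp_i_times prob_space)
    thus "integrable lborel (\<lambda>x. \<integral>y. norm (case_prod f (x, y)) \<partial>M)"
      by simp
    show "AE x in lborel. integrable M (\<lambda>y. case_prod f (x, y))"
    proof (rule AE_I2)
      fix x show "integrable M (\<lambda>y. case_prod f (x, y))"
        unfolding f_def prod.case by (rule integrable_scaleR_right[OF integrable_iexp_int[OF Ssum_meas]])
    qed
  qed (fact fm)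
  have "(\<integral>\<theta>. indicator {-pi..pi} \<theta> *\<^sub>R phi \<theta> ^ n \<partial>lborel) = (\<integral>\<theta>. (\<integral>\<omega>. f \<theta> \<omega> \<partial>M) \<partial>lborel)"
    by (simp add: f_def phi_pow[symmetric])
  also have "\<dots> = (\<integral>\<omega>. (\<integral>\<theta>. f \<theta> \<omega> \<partial>lborel) \<partial>M)"
    using P.Fubini_integral[OF int] by simp
  also have "\<dots> = (\<integral>\<omega>. complex_of_real (2*pi * indicator {\<omega>\<in>space M. Ssum n \<omega> = 0} \<omega>) \<partial>M)"
  proof (rule Bochner_Integration.integral_cong)
    fix \<omega> assume "\<omega> \<in> space M"
    thus "(\<integral>\<theta>. f \<theta> \<omega> \<partial>lborel) = complex_of_real (2*pi * indicator {\<omega>\<in>space M. Ssum n \<omega> = 0} \<omega>)"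
      unfolding f_def inner_iexp by (simp add: indicator_def)
  qed simp
  also have "\<dots> = complex_of_real (2*pi * prob {\<omega>\<in>space M. Ssum n \<omega> = 0})"
    by simp
  finally show ?thesis ..
qed

end

context lclt begin

definition pX :: "int \<Rightarrow> real" where "pX k = measure M {\<omega>\<in>space M. X 0 \<omega> = k}"

definition DX where "DX = distr M (count_space UNIV) (X 0)"

lemma DX_density: "DX = density (count_space UNIV) (\<lambda>k. ennreal (pX k))"
proof (rule measure_eqI)
  show "sets DX = sets (density (count_space UNIV) (\<lambda>k. ennreal (pX k)))"
    by (simp add: DX_def)
  fix A :: "int set" assume "A \<in> sets DX"
  interpret D: prob_space DX unfolding DX_def by (rule prob_space_distr) simp
  have pD: "pX k = measure DX {k}" for k
    unfolding pX_def DX_def by (subst measure_distr) (auto intro!: arg_cong[where f="measure M"])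
  have "(\<integral>\<^sup>+ x. ennreal (pX x) * indicator A x \<partial>count_space UNIV) =
      (\<integral>\<^sup>+ x. emeasure DX {x} * indicator A x \<partial>count_space UNIV)"
    by (auto intro!: nn_integral_cong simp: pD D.emeasure_eq_measure)
  also have "\<dots> = (\<integral>\<^sup>+ x. emeasure DX {x} \<partial>count_space A)"
    by (subst nn_integral_restrict_space[symmetric]) (auto simp: restrict_count_space nn_integral_count_space_indicator)
  also have "\<dots> = emeasure DX (\<Union>x\<in>A. {x})"
    by (intro emeasure_UN_countable[symmetric]) (auto simp: disjoint_family_on_def DX_def)
  also have "\<dots> = emeasure DX A" by simp
  finally show "emeasure DX A = emeasure (density (count_space UNIV) (\<lambda>k. ennreal (pX k))) A"
    by (simp add: emeasure_density)
qed


lemma pX_nonneg: "0 \<le> pX k" by (simp add: pX_def)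

lemma charfn_phi: "charfn M (X 0) \<theta> = phi \<theta>"
proof -
  interpret D: prob_space DX unfolding DX_def by (rule prob_space_distr) simp
  have intD: "integrable DX (\<lambda>k. iexp (\<theta> * real_of_int k))"
    by (rule D.integrable_const_bound[where B=1]) (auto simp: DX_def norm_exp_i_times)
  have "phi \<theta> = (\<integral>k. iexp (\<theta> * real_of_int k) \<partial>DX)"
    unfolding phi_def DX_def by (rule integral_distr[symmetric, OF Xmeas']) simp
  also have "\<dots> = (\<integral>k. pX k *\<^sub>R iexp (\<theta> * real_of_int k) \<partial>count_space UNIV)"
    unfolding DX_density by (rule integral_density) (auto simp: pX_nonneg)
  finally have 1: "phi \<theta> = infsetsum (\<lambda>k. pX k *\<^sub>R iexp (\<theta> * real_of_int k)) UNIV"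
    by (simp add: infsetsum_def)
  have "integrable (count_space UNIV) (\<lambda>k. pX k *\<^sub>R iexp (\<theta> * real_of_int k))"
    using intD unfolding DX_density by (subst (asm) integrable_density) (auto simp: pX_nonneg)
  hence "Infinite_Set_Sum.abs_summable_on (\<lambda>k. pX k *\<^sub>R iexp (\<theta> * real_of_int k)) UNIV"
    by (simp add: abs_summable_on_def)
  with 1 have "phi \<theta> = infsum (\<lambda>k. pX k *\<^sub>R iexp (\<theta> * real_of_int k)) UNIV"
    by (simp add: infsetsum_infsum)
  also have "\<dots> = charfn M (X 0) \<theta>"
    unfolding charfn_def pX_def
    by (rule infsum_cong) (simp add: cis_conv_exp scaleR_conv_of_real mult.commute)
  finally show ?thesis ..
qed

lemma norm_phi_le1: "norm (phi \<theta>) \<le> 1"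
proof -
  have "norm (phi \<theta>) \<le> (\<integral>\<omega>. norm (iexp (\<theta> * real_of_int (X 0 \<omega>))) \<partial>M)"
    unfolding phi_def by (rule integral_norm_bound)
  also have "\<dots> = 1" by (simp add: norm_exp_i_times prob_space)
  finally show ?thesis .
qed

lemma phi_0: "phi 0 = 1"
  by (simp add: phi_def prob_space)

lemma isCont_phi: "isCont phi t"
  unfolding continuous_at_sequentially
proof safe
  fix Y assume Y: "Y \<longlonglongrightarrow> t"
  show "(phi \<circ> Y) \<longlonglongrightarrow> phi t"
    unfolding comp_def phi_def
    by (rule integral_dominated_convergence[where w="\<lambda>_. 1"]) 
       (auto simp: norm_exp_i_times intro!: tendsto_intros Y)
qed

lemma phi_meas[measurable]: "phi \<in> borel_measurable borel"
  by (auto intro!: borel_measurable_continuous_onI continuous_at_imp_continuous_on isCont_phi)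
end

context lclt begin

lemma exists_supp: "\<exists>k. pX k > 0"
proof (rule ccontr)
  assume "\<not> ?thesis"
  hence z: "pX k = 0" for k using pX_nonneg[of k] by (metis antisym not_less)
  interpret D: prob_space DX unfolding DX_def by (rule prob_space_distr) simp
  have "emeasure DX UNIV = 1" using D.emeasure_space_1 by (simp add: DX_def)
  also have "emeasure DX UNIV = (\<integral>\<^sup>+ k. ennreal (pX k) \<partial>count_space UNIV)"
    unfolding DX_density by (simp add: emeasure_density)
  also have "\<dots> = 0" by (simp add: z)
  finally show False by simp
qed

lemma unit_re1: fixes z :: complex assumes "norm z = 1" "Re z = 1" shows "z = 1"
proof -
  have "(Re z)^2 + (Im z)^2 = 1" using assms(1) by (simp add: cmod_def)
  hence "Im z = 0" using assms(2) by simp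
  thus ?thesis using assms(2) by (simp add: complex_eq_iff)
qed

lemma phi_lt1:
  assumes A1: "\<And>y::int. int_subgroup_gen {y + k | k. measure M {\<omega>\<in>space M. X 0 \<omega> = k} > 0} = UNIV"
    and th: "\<theta> \<noteq> 0" "\<bar>\<theta>\<bar> \<le> pi"
  shows "norm (phi \<theta>) < 1"
proof (rule ccontr)
  assume "\<not> norm (phi \<theta>) < 1"
  hence w1: "norm (phi \<theta>) = 1" using norm_phi_le1[of \<theta>] by simp
  define w where "w = phi \<theta>"
  define g where "g = (\<lambda>\<omega>. iexp (\<theta> * real_of_int (X 0 \<omega>)))"
  have gint: "integrable M g" unfolding g_def by (rule integrable_iexp_int[OF Xmeas'])
  have gn: "norm (g \<omega>) = 1" for \<omega> by (simp add: g_def norm_exp_i_times)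
  have wn: "norm w = 1" using w1 by (simp add: w_def)
  have cw: "cnj w * w = 1"
    using complex_norm_square[of w] wn by (simp add: mult.commute)
  have int1: "integrable M (\<lambda>\<omega>. 1 - Re (cnj w * g \<omega>))"
    using gint by (intro Bochner_Integration.integrable_diff integrable_Re integrable_mult_right) auto
  have "(\<integral>\<omega>. 1 - Re (cnj w * g \<omega>) \<partial>M) = 1 - Re (\<integral>\<omega>. cnj w * g \<omega> \<partial>M)"
    using gint by (simp add: Bochner_Integration.integral_diff integrable_Re integrable_mult_right prob_space)
  also have "(\<integral>\<omega>. cnj w * g \<omega> \<partial>M) = cnj w * w"
    by (simp add: w_def g_def phi_def)
  finally have "(\<integral>\<omega>. 1 - Re (cnj w * g \<omega>) \<partial>M) = 0" using cw by simp
  moreover have "AE \<omega> in M. 0 \<le> 1 - Re (cnj w * g \<omega>)"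
  proof (rule AE_I2)
    fix \<omega>
    have "Re (cnj w * g \<omega>) \<le> norm (cnj w * g \<omega>)" by (rule complex_Re_le_cmod)
    also have "\<dots> = 1" by (simp add: norm_mult gn wn)
    finally show "0 \<le> 1 - Re (cnj w * g \<omega>)" by simp
  qed
  ultimately have ae: "AE \<omega> in M. 1 - Re (cnj w * g \<omega>) = 0"
    using integral_nonneg_eq_0_iff_AE[OF int1] by simp
  have ae2: "AE \<omega> in M. g \<omega> = w"
  proof (rule AE_mp[OF ae], rule AE_I2, rule impI)
    fix \<omega> assume "1 - Re (cnj w * g \<omega>) = 0"
    hence "cnj w * g \<omega> = 1" by (intro unit_re1) (auto simp: norm_mult gn wn)
    hence "w * (cnj w * g \<omega>) = w" by simp
    moreover have "w * (cnj w * g \<omega>) = (cnj w * w) * g \<omega>" by (simp only: ac_simps)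
    ultimately show "g \<omega> = w" using cw by simp
  qed
  have supp: "iexp (\<theta> * real_of_int k) = w" if pk: "pX k > 0" for k
  proof (rule ccontr)
    assume ne: "iexp (\<theta> * real_of_int k) \<noteq> w"
    from ae2 obtain N where N: "{\<omega>\<in>space M. \<not> g \<omega> = w} \<subseteq> N" "emeasure M N = 0" "N \<in> sets M"
      by (rule AE_E)
    have "{\<omega>\<in>space M. X 0 \<omega> = k} \<subseteq> N" using N(1) ne by (auto simp: g_def)
    hence "pX k \<le> measure M N" unfolding pX_def using N(3)
      by (intro finite_measure_mono) auto
    also have "\<dots> = 0" using N(2) by (simp add: measure_def)
    finally show False using pk by simp
  qed
  obtain k0 where k0: "pX k0 > 0" using exists_supp by blast
  define H where "H = {m::int. iexp (\<theta> * real_of_int m) = 1}"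
  have iexp_diff: "iexp (\<theta> * real_of_int (a - b)) = iexp (\<theta> * real_of_int a) / iexp (\<theta> * real_of_int b)" for a b
    unfolding cis_conv_exp[symmetric] by (simp only: cis_divide of_int_diff right_diff_distrib)
  have wne: "w \<noteq> 0" using wn by auto
  have "H \<in> {G. 0 \<in> G \<and> (\<forall>a\<in>G. \<forall>b\<in>G. a - b \<in> G) \<and> {- k0 + k | k. measure M {\<omega>\<in>space M. X 0 \<omega> = k} > 0} \<subseteq> G}"
  proof (safe)
    show "0 \<in> H" by (simp add: H_def)
  next
    fix a b assume "a \<in> H" "b \<in> H" thus "a - b \<in> H" using iexp_diff[of a b] by (simp add: H_def)
  next
    fix k assume "0 < measure M {\<omega>\<in>space M. X 0 \<omega> = k}"
    hence "pX k > 0" by (simp add: pX_def)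
    hence "iexp (\<theta> * real_of_int k) = w" by (rule supp)
    moreover have "iexp (\<theta> * real_of_int k0) = w" by (rule supp[OF k0])
    ultimately show "- k0 + k \<in> H" using wne iexp_diff[of k k0] by (simp add: H_def)
  qed
  hence "int_subgroup_gen {- k0 + k | k. measure M {\<omega>\<in>space M. X 0 \<omega> = k} > 0} \<subseteq> H"
    unfolding int_subgroup_gen_def by (rule Inter_lower)
  hence "1 \<in> H" using A1[of "-k0"] by auto
  hence "iexp \<theta> = 1" by (simp add: H_def)
  hence "cis \<theta> = 1" by (simp add: cis_conv_exp)
  hence "Re (cis \<theta>) = 1" by simp
  hence "cos \<theta> = 1" by simp
  hence "cos \<bar>\<theta>\<bar> = cos 0" by simp
  hence "\<bar>\<theta>\<bar> = 0" using cos_inj_pi[of "\<bar>\<theta>\<bar>" 0] th by simp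
  thus False using th by simp
qed

end

lemma pow_diff_bound:
  fixes a b :: complex
  assumes "norm a \<le> 1" "norm b \<le> 1"
  shows "norm (a^n - b^n) \<le> real n * norm (a - b)"
proof (induction n)
  case 0 thus ?case by simp
next
  case (Suc n)
  have "a^Suc n - b^Suc n = a * (a^n - b^n) + b^n * (a - b)" by (simp add: algebra_simps)
  hence "norm (a^Suc n - b^Suc n) \<le> norm a * norm (a^n - b^n) + norm (b^n) * norm (a - b)"
    by (metis norm_mult norm_triangle_ineq)
  also have "\<dots> \<le> 1 * norm (a^n - b^n) + 1 * norm (a - b)"
    using assms by (intro add_mono mult_right_mono) (auto simp: norm_power power_le_one)
  also have "\<dots> \<le> real n * norm (a - b) + norm (a - b)" using Suc by simp
  finally show ?case by (simp add: algebra_simps)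
qed

lemma exp_quad:
  fixes x :: real assumes x: "x \<ge> 0"
  shows "\<bar>exp (-x) - (1 - x)\<bar> \<le> x^2"
proof -
  have l: "1 - x \<le> exp (-x)" using exp_ge_add_one_self[of "-x"] by simp
  have "1 + x \<le> exp x" by (rule exp_ge_add_one_self)
  hence "exp (-x) \<le> 1 / (1 + x)" using x by (simp add: exp_minus field_simps)
  also have "1 / (1 + x) \<le> 1 - x + x^2"
  proof -
    have "1 \<le> (1 + x) * (1 - x + x^2)" using x by (simp add: algebra_simps power2_eq_square power3_eq_cube)
    thus ?thesis using x by (simp add: field_simps)
  qed
  finally show ?thesis using l by simp
qed

lemma ev_exp_small:
  fixes a s p :: real assumes "a > 0" "s > 0"
  shows "eventually (\<lambda>n. exp (-(a * real n powr s)) \<le> real n powr (-p)) sequentially"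
proof -
  have "((\<lambda>x::real. exp(-(a*x powr s)) * x powr p) \<longlongrightarrow> 0) at_top"
    using assms by real_asymp
  hence "eventually (\<lambda>x::real. exp(-(a*x powr s)) * x powr p < 1) at_top"
    by (rule order_tendstoD) simp
  moreover have "eventually (\<lambda>x::real. x > 0) at_top" by (rule eventually_gt_at_top)
  ultimately have "eventually (\<lambda>x::real. exp(-(a*x powr s)) \<le> x powr (-p)) at_top"
  proof eventually_elim
    case (elim x)
    hence "exp(-(a*x powr s)) * x powr p * x powr (-p) \<le> 1 * x powr (-p)"
      by (intro mult_right_mono) auto
    thus ?case using elim by (simp add: mult.assoc powr_add[symmetric])
  qed
  thus ?thesis by (rule eventually_compose_filterlim[OF _ filterlim_real_sequentially])
qed

lemma ev_powr_small:
  fixes q \<eta> :: real assumes "q < 0" "\<eta> > 0"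
  shows "eventually (\<lambda>n. real n powr q \<le> \<eta>) sequentially"
proof -
  have "((\<lambda>x::real. x powr q) \<longlongrightarrow> 0) at_top" using assms by real_asymp
  hence "eventually (\<lambda>x::real. x powr q < \<eta>) at_top" using assms by (intro order_tendstoD) auto
  hence "eventually (\<lambda>x::real. x powr q \<le> \<eta>) at_top" by (auto elim: eventually_mono)
  thus ?thesis by (rule eventually_compose_filterlim[OF _ filterlim_real_sequentially])
qed

lemma gamma_real_pos_int:
  fixes x :: real
  assumes "x > 0"
  shows "(\<lambda>t. t powr (x - 1) / exp t) absolutely_integrable_on {0<..}"
    "integral {0<..} (\<lambda>t. t powr (x - 1) / exp t) = Gamma x"
proof -
  have h: "((\<lambda>t. t powr (x - 1) / exp t) has_integral Gamma x) {0..}"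
    by (rule Gamma_integral_real) fact
  hence "((\<lambda>t. if t \<in> {0<..} then t powr (x - 1) / exp t else 0) has_integral Gamma x) {0..}"
    by (rule has_integral_spike [of "{0}", rotated 2]) auto
  hence h2: "((\<lambda>t. t powr (x - 1) / exp t) has_integral Gamma x) {0<..}"
    by (subst (asm) has_integral_restrict) auto
  show "(\<lambda>t. t powr (x - 1) / exp t) absolutely_integrable_on {0<..}"
    by (rule nonnegative_absolutely_integrable_1) (use h2 in auto)
  show "integral {0<..} (\<lambda>t. t powr (x - 1) / exp t) = Gamma x"
    using h2 by (rule integral_unique)
qed

lemma stretched_exp_int:
  fixes a \<beta> :: real
  assumes a: "a > 0" and b: "\<beta> > 0"
  shows "(\<lambda>u. exp (-(a * u powr \<beta>))) absolutely_integrable_on {0<..} \<and>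
         integral {0<..} (\<lambda>u. exp (-(a * u powr \<beta>))) = Gamma (1/\<beta>) / (\<beta> * a powr (1/\<beta>))"
proof -
  define g where "g = (\<lambda>t::real. (t / a) powr (1/\<beta>))"
  define g' where "g' = (\<lambda>t::real. (1/\<beta>) * (t / a) powr (1/\<beta> - 1) / a)"
  define C where "C = 1 / (\<beta> * a powr (1/\<beta>))"
  have img: "g ` {0<..} = {0<..}"
  proof safe
    fix t :: real assume "0 < t" thus "0 < g t" using a by (simp add: g_def)
  next
    fix u :: real assume u: "0 < u"
    have "g (a * u powr \<beta>) = u" using u a b by (simp add: g_def powr_powr)
    moreover have "a * u powr \<beta> > 0" using u a by simp
    ultimately show "u \<in> g ` {0<..}" by force
  qed
  have der: "(g has_field_derivative g' t) (at t within {0<..})" if "t \<in> {0<..}" for t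
    using that a unfolding g_def g'_def
    by (auto intro!: derivative_eq_intros simp: field_simps)
  have inj: "inj_on g {0<..}"
  proof (rule inj_onI)
    fix x y :: real assume "x \<in> {0<..}" "y \<in> {0<..}" "g x = g y"
    hence "(g x) powr \<beta> = (g y) powr \<beta>" by simp
    thus "x = y" using \<open>x \<in> _\<close> \<open>y \<in> _\<close> a b by (simp add: g_def powr_powr)
  qed
  have eq: "\<bar>g' t\<bar> * exp (-(a * g t powr \<beta>)) = C * (t powr (1/\<beta> - 1) / exp t)" if "t > 0" for t
  proof -
    have e: "exp (-(a * g t powr \<beta>)) = 1 / exp t"
      using that a b by (simp add: g_def powr_powr exp_minus field_simps)
    have "g' t = (1/\<beta>) * (t powr (1/\<beta> - 1) / a powr (1/\<beta> - 1)) / a"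
      using that a by (simp add: g'_def powr_divide)
    also have "\<dots> = C * t powr (1/\<beta> - 1)"
    proof -
      have "a powr (1/\<beta>) = a powr (1/\<beta> - 1) * a" using a powr_add[of a "1/\<beta> - 1" 1] by simp
      thus ?thesis using a b by (simp add: C_def field_simps)
    qed
    finally have "g' t = C * t powr (1/\<beta> - 1)" .
    moreover have "C > 0" using a b by (simp add: C_def)
    ultimately show ?thesis using e by simp
  qed
  have lhs: "(\<lambda>t. \<bar>g' t\<bar> * exp (-(a * g t powr \<beta>))) absolutely_integrable_on {0<..} \<and>
      integral {0<..} (\<lambda>t. \<bar>g' t\<bar> * exp (-(a * g t powr \<beta>))) = C * Gamma (1/\<beta>)"
  proof
    have "(\<lambda>t. C * (t powr (1/\<beta> - 1) / exp t)) absolutely_integrable_on {0<..}"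
      using gamma_real_pos_int(1)[of "1/\<beta>"] b by (intro set_integrable_mult_right) auto
    thus "(\<lambda>t. \<bar>g' t\<bar> * exp (-(a * g t powr \<beta>))) absolutely_integrable_on {0<..}"
      by (subst set_integrable_cong[OF refl refl, of _ _ "\<lambda>t. C * (t powr (1/\<beta> - 1) / exp t)"]) (auto simp: eq)
    have "integral {0<..} (\<lambda>t. \<bar>g' t\<bar> * exp (-(a * g t powr \<beta>))) = integral {0<..} (\<lambda>t. C * (t powr (1/\<beta> - 1) / exp t))"
      by (rule integral_cong) (simp add: eq)
    also have "\<dots> = C * Gamma (1/\<beta>)"
      by (simp only: integral_mult_right gamma_real_pos_int(2)[of "1/\<beta>", OF divide_pos_pos[OF zero_less_one b]])
    finally show "integral {0<..} (\<lambda>t. \<bar>g' t\<bar> * exp (-(a * g t powr \<beta>))) = C * Gamma (1/\<beta>)" .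
  qed
  have "(\<lambda>u. exp (-(a * u powr \<beta>))) absolutely_integrable_on g ` {0<..} \<and>
        integral (g ` {0<..}) (\<lambda>u. exp (-(a * u powr \<beta>))) = C * Gamma (1/\<beta>)"
    using has_absolute_integral_change_of_variables_1'[of "{0<..}" g g' "\<lambda>u. exp (-(a * u powr \<beta>))", OF _ der inj] lhs
    by auto
  thus ?thesis unfolding img C_def by simp
qed


lemma stretched_exp_lborel:
  fixes a \<beta> :: real
  assumes a: "a > 0" and b: "\<beta> > 0"
  shows "integrable lborel (\<lambda>u. exp (-(a * \<bar>u\<bar> powr \<beta>)))"
    "(\<integral>u. exp (-(a * \<bar>u\<bar> powr \<beta>)) \<partial>lborel) = 2 * Gamma (1/\<beta>) / (\<beta> * a powr (1/\<beta>))"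
proof -
  define f where "f = (\<lambda>u::real. exp (-(a * \<bar>u\<bar> powr \<beta>)))"
  define B where "B = Gamma (1/\<beta>) / (\<beta> * a powr (1/\<beta>))"
  have fm[measurable]: "f \<in> borel_measurable borel" unfolding f_def by measurable
  define P where "P = (\<lambda>u. indicator {0<..} u * f u)"
  have Pm[measurable]: "P \<in> borel_measurable borel" unfolding P_def by measurable
  note G = stretched_exp_int[OF a b]
  have ai: "(\<lambda>u. exp (-(a * u powr \<beta>))) absolutely_integrable_on {0<..}" using G by simp
  have "set_integrable lebesgue {0<..} f"
    using ai by (subst set_integrable_cong[OF refl refl, of _ _ "\<lambda>u. exp (-(a * u powr \<beta>))"]) (auto simp: f_def)
  hence "integrable lebesgue P"
    by (simp add: set_integrable_def P_def mult.commute)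
  hence Pint: "integrable lborel P"
    by (subst (asm) integrable_completion) auto
  have "(LINT u:{0<..}|lebesgue. f u) = integral {0<..} f"
    by (rule set_lebesgue_integral_eq_integral(2)) fact
  also have "integral {0<..} f = integral {0<..} (\<lambda>u. exp (-(a * u powr \<beta>)))"
    by (rule integral_cong) (simp add: f_def)
  also have "\<dots> = B" using G by (simp add: B_def)
  finally have "(\<integral>u. P u \<partial>lebesgue) = B"
    by (simp add: set_lebesgue_integral_def P_def mult.commute)
  hence PI: "(\<integral>u. P u \<partial>lborel) = B"
    by (subst (asm) integral_completion) auto
  have Pdistr: "integrable (distr lborel borel uminus) P" using Pint by (simp add: lborel_distr_uminus)
  have Qint: "integrable lborel (\<lambda>u. P (- u))"
    using Pdistr by (subst (asm) integrable_distr_eq) auto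
  have QI: "(\<integral>u. P (- u) \<partial>lborel) = B"
  proof -
    have "(\<integral>u. P (- u) \<partial>lborel) = (\<integral>u. P u \<partial>distr lborel borel uminus)"
      by (rule integral_distr[symmetric]) auto
    thus ?thesis using PI by (simp add: lborel_distr_uminus)
  qed
  have ae: "AE u in lborel. f u = P u + P (- u)"
    using AE_lborel_singleton[of 0] by eventually_elim (auto simp: P_def f_def indicator_def)
  have "integrable lborel (\<lambda>u. P u + P (- u))" using Pint Qint by simp
  thus "integrable lborel (\<lambda>u. exp (-(a * \<bar>u\<bar> powr \<beta>)))"
    unfolding f_def[symmetric] by (rule integrable_cong_AE_imp[OF _ _ AE_symmetric[OF ae]]) simp
  have "(\<integral>u. f u \<partial>lborel) = (\<integral>u. P u + P (- u) \<partial>lborel)"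
    by (rule integral_cong_AE) (use ae in auto)
  also have "\<dots> = 2 * B" using Pint Qint PI QI by simp
  finally show "(\<integral>u. exp (-(a * \<bar>u\<bar> powr \<beta>)) \<partial>lborel) = 2 * Gamma (1/\<beta>) / (\<beta> * a powr (1/\<beta>))"
    by (simp add: f_def B_def)
qed

lemma core_fixed_n:
  fixes \<phi> :: "real \<Rightarrow> complex" and \<beta> c e \<kappa> \<eta> B' r :: real and n :: nat
  assumes b: "\<beta> > 0" and c: "c > 0" and e: "e > 0" and k: "\<kappa> > 0" "\<kappa> \<le> c"
    and eta: "\<eta> \<le> 1" and B': "B' \<ge> 0" and n: "n \<ge> 1" and r: "0 < r" "r \<le> \<eta>"
    and \<phi>m[measurable]: "\<phi> \<in> borel_measurable borel"
    and bnd1: "\<And>\<theta>. \<bar>\<theta>\<bar> \<le> pi \<Longrightarrow> norm (\<phi> \<theta>) \<le> 1 - \<kappa> * \<bar>\<theta>\<bar> powr \<beta>"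
    and bnd2: "\<And>\<theta>. \<bar>\<theta>\<bar> \<le> \<eta> \<Longrightarrow> norm (\<phi> \<theta> - exp (-(c * \<bar>\<theta>\<bar> powr \<beta>))) \<le> B' * \<bar>\<theta>\<bar> powr (\<beta> + e)"
  shows "norm ((\<integral>\<theta>. indicator {-pi..pi} \<theta> *\<^sub>R \<phi> \<theta> ^ n \<partial>lborel)
                - complex_of_real (\<integral>\<theta>. exp (-((real n * c) * \<bar>\<theta>\<bar> powr \<beta>)) \<partial>lborel))
         \<le> 2 * r * (real n * B' * r powr (\<beta> + e))
           + 2 * exp (-((real n * \<kappa> / 2) * r powr \<beta>)) * (2 * Gamma (1/\<beta>) / (\<beta> * (real n * \<kappa> / 2) powr (1/\<beta>)))"
proof -
  define A where "A = real n * B' * r powr (\<beta> + e)"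
  define E where "E = exp (-((real n * \<kappa> / 2) * r powr \<beta>))"
  define g where "g = (\<lambda>\<theta>. complex_of_real (exp (-((real n * c) * \<bar>\<theta>\<bar> powr \<beta>))))"
  define f where "f = (\<lambda>\<theta>. indicator {-pi..pi} \<theta> *\<^sub>R \<phi> \<theta> ^ n)"
  define h where "h = (\<lambda>\<theta>. f \<theta> - g \<theta>)"
  define kk where "kk = (\<lambda>\<theta>. indicator {-r..r} \<theta> * A + 2 * E * exp (-((real n * \<kappa> / 2) * \<bar>\<theta>\<bar> powr \<beta>)))"
  have npos: "real n > 0" using n by simp
  have nk: "real n * \<kappa> / 2 > 0" using npos k by simp
  have nc: "real n * c > 0" using npos c by simp
  have A0: "A \<ge> 0" using B' by (simp add: A_def)
  have E0: "E \<ge> 0" by (simp add: E_def)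
  note I1 = stretched_exp_lborel[OF nc b]
  note I2 = stretched_exp_lborel[OF nk b]
  have gint: "integrable lborel g" unfolding g_def using I1(1) by simp
  have fint: "integrable lborel f"
  proof (rule Bochner_Integration.integrable_bound[where f="indicator {-pi..pi} :: real \<Rightarrow> real"])
    show "integrable lborel (indicator {-pi..pi} :: real \<Rightarrow> real)" by simp
    show "f \<in> borel_measurable lborel" unfolding f_def by measurable
    show "AE x in lborel. norm (f x) \<le> norm (indicator {-pi..pi} x :: real)"
    proof (rule AE_I2)
      fix x
      show "norm (f x) \<le> norm (indicator {-pi..pi} x :: real)"
      proof (cases "\<bar>x\<bar> \<le> pi")
        case True
        have "norm (\<phi> x) \<le> 1" using bnd1[OF True] k by (smt (verit) mult_nonneg_nonneg powr_ge_zero)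
        hence "norm (\<phi> x ^ n) \<le> 1" by (simp add: norm_power power_le_one)
        thus ?thesis using True by (simp add: f_def indicator_def abs_le_iff)
      next
        case False
        hence "x \<notin> {-pi..pi}" by auto
        thus ?thesis by (simp add: f_def)
      qed
    qed
  qed
  have ir: "integrable lborel (indicator {-r..r} :: real \<Rightarrow> real)" by (rule integrable_real_indicator) (use r in auto)
  have kint: "integrable lborel kk"
    unfolding kk_def using I2(1) ir by (intro Bochner_Integration.integrable_add integrable_mult_right) (auto intro!: integrable_mult_left)
  have kI: "(\<integral>\<theta>. kk \<theta> \<partial>lborel) = 2 * r * A + 2 * E * (2 * Gamma (1/\<beta>) / (\<beta> * (real n * \<kappa> / 2) powr (1/\<beta>)))"
  proof -
    have "(\<integral>\<theta>. kk \<theta> \<partial>lborel) = (\<integral>\<theta>. indicator {-r..r} \<theta> * A \<partial>lborel) + (\<integral>\<theta>. 2 * E * exp (-((real n * \<kappa> / 2) * \<bar>\<theta>\<bar> powr \<beta>)) \<partial>lborel)"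
      unfolding kk_def using I2(1) ir by (intro Bochner_Integration.integral_add) (auto intro!: integrable_mult_left)
    also have "(\<integral>\<theta>. indicator {-r..r} \<theta> * A \<partial>lborel) = 2 * r * A" using r by simp
    also have "(\<integral>\<theta>. 2 * E * exp (-((real n * \<kappa> / 2) * \<bar>\<theta>\<bar> powr \<beta>)) \<partial>lborel) = 2 * E * (2 * Gamma (1/\<beta>) / (\<beta> * (real n * \<kappa> / 2) powr (1/\<beta>)))"
      using I2(2) by simp
    finally show ?thesis .
  qed
  have pw: "norm (h \<theta>) \<le> kk \<theta>" for \<theta>
  proof -
    define x where "x = \<bar>\<theta>\<bar> powr \<beta>"
    have x0: "x \<ge> 0" by (simp add: x_def)
    have kk2: "0 \<le> 2 * E * exp (-((real n * \<kappa> / 2) * x))" using E0 by simp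
    have en: "exp (-((real n * c) * x)) = exp (-(c*x)) ^ n"
      using exp_of_nat_mult[of n "-(c*x)"] by (simp add: algebra_simps)
    have gx: "g \<theta> = complex_of_real (exp (-((real n * c) * x)))" by (simp add: g_def x_def)
    show ?thesis
    proof (cases "\<bar>\<theta>\<bar> \<le> r")
      case True
      have t1: "\<bar>\<theta>\<bar> \<le> \<eta>" using True r by simp
      have tp: "\<bar>\<theta>\<bar> \<le> pi" using t1 eta pi_gt3 by simp
      have fx: "f \<theta> = \<phi> \<theta> ^ n" using tp by (simp add: f_def abs_le_iff)
      have n1: "norm (\<phi> \<theta>) \<le> 1" using bnd1[OF tp] k x0 unfolding x_def[symmetric]
        by (smt (verit) mult_nonneg_nonneg)
      have n2: "norm (complex_of_real (exp (-(c*x)))) \<le> 1" using c x0 by simp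
      have "norm (h \<theta>) = norm (\<phi> \<theta> ^ n - complex_of_real (exp (-(c*x))) ^ n)"
        by (simp add: h_def fx gx en)
      also have "\<dots> \<le> real n * norm (\<phi> \<theta> - complex_of_real (exp (-(c*x))))"
        by (rule pow_diff_bound[OF n1 n2])
      also have "\<dots> \<le> real n * (B' * \<bar>\<theta>\<bar> powr (\<beta> + e))"
        using bnd2[OF t1] by (intro mult_left_mono) (simp_all add: x_def)
      also have "\<dots> \<le> real n * (B' * r powr (\<beta> + e))"
        using True B' b e by (intro mult_left_mono powr_mono2) auto
      also have "\<dots> = A" by (simp add: A_def)
      also have "\<dots> \<le> kk \<theta>" using True kk2 by (simp add: kk_def x_def abs_le_iff)
      finally show ?thesis .
    next
      case False
      have xr: "r powr \<beta> \<le> x" using False r b unfolding x_def by (intro powr_mono2) auto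
      have f1: "norm (f \<theta>) \<le> exp (-((real n * \<kappa>) * x))"
      proof (cases "\<bar>\<theta>\<bar> \<le> pi")
        case True
        have fx: "f \<theta> = \<phi> \<theta> ^ n" using True by (simp add: f_def abs_le_iff)
        have "norm (\<phi> \<theta>) \<le> 1 - \<kappa> * x" using bnd1[OF True] by (simp add: x_def)
        also have "\<dots> \<le> exp (-(\<kappa> * x))" using exp_ge_add_one_self[of "-(\<kappa>*x)"] by simp
        finally have "norm (\<phi> \<theta>) ^ n \<le> exp (-(\<kappa> * x)) ^ n" by (intro power_mono) auto
        also have "\<dots> = exp (-((real n * \<kappa>) * x))"
          using exp_of_nat_mult[of n "-(\<kappa>*x)"] by (simp add: algebra_simps)
        finally show ?thesis by (simp add: fx norm_power)
      next
        case False
        hence "\<theta> \<notin> {-pi..pi}" by auto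
        thus ?thesis by (simp add: f_def)
      qed
      have g1: "norm (g \<theta>) \<le> exp (-((real n * \<kappa>) * x))"
        using k x0 npos by (simp add: gx mult_right_mono)
      have "norm (h \<theta>) \<le> norm (f \<theta>) + norm (g \<theta>)" unfolding h_def by (rule norm_triangle_ineq4)
      also have "\<dots> \<le> 2 * exp (-((real n * \<kappa>) * x))" using f1 g1 by simp
      also have "\<dots> = 2 * exp (-((real n * \<kappa> / 2) * x)) * exp (-((real n * \<kappa> / 2) * x))"
        by (simp add: exp_add[symmetric])
      also have "\<dots> \<le> 2 * E * exp (-((real n * \<kappa> / 2) * x))"
        unfolding E_def using xr nk by (intro mult_right_mono mult_left_mono) (auto intro!: mult_left_mono)
      also have "\<dots> \<le> kk \<theta>" using A0 by (simp add: kk_def x_def)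
      finally show ?thesis .
    qed
  qed
  have "(\<integral>\<theta>. f \<theta> \<partial>lborel) - complex_of_real (\<integral>\<theta>. exp (-((real n * c) * \<bar>\<theta>\<bar> powr \<beta>)) \<partial>lborel) = (\<integral>\<theta>. h \<theta> \<partial>lborel)"
    unfolding h_def using fint gint by (simp add: g_def)
  hence "norm ((\<integral>\<theta>. f \<theta> \<partial>lborel) - complex_of_real (\<integral>\<theta>. exp (-((real n * c) * \<bar>\<theta>\<bar> powr \<beta>)) \<partial>lborel))
      = norm (\<integral>\<theta>. h \<theta> \<partial>lborel)" by simp
  also have "\<dots> \<le> (\<integral>\<theta>. norm (h \<theta>) \<partial>lborel)" by (rule integral_norm_bound)
  also have "\<dots> \<le> (\<integral>\<theta>. kk \<theta> \<partial>lborel)"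
    using fint gint kint pw unfolding h_def by (intro integral_mono) auto
  finally show ?thesis unfolding kI f_def A_def E_def .
qed


lemma core_asymp:
  fixes \<phi> :: "real \<Rightarrow> complex" and \<beta> c e \<kappa> \<eta> B' :: real
  assumes b: "\<beta> > 0" and c: "c > 0" and e: "e > 0" and k: "\<kappa> > 0" "\<kappa> \<le> c"
    and eta: "\<eta> > 0" "\<eta> \<le> 1" and B': "B' \<ge> 0"
    and \<phi>m[measurable]: "\<phi> \<in> borel_measurable borel"
    and bnd1: "\<And>\<theta>. \<bar>\<theta>\<bar> \<le> pi \<Longrightarrow> norm (\<phi> \<theta>) \<le> 1 - \<kappa> * \<bar>\<theta>\<bar> powr \<beta>"
    and bnd2: "\<And>\<theta>. \<bar>\<theta>\<bar> \<le> \<eta> \<Longrightarrow> norm (\<phi> \<theta> - exp (-(c * \<bar>\<theta>\<bar> powr \<beta>))) \<le> B' * \<bar>\<theta>\<bar> powr (\<beta> + e)"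
  shows "\<exists>C. eventually (\<lambda>n. norm ((\<integral>\<theta>. indicator {-pi..pi} \<theta> *\<^sub>R \<phi> \<theta> ^ n \<partial>lborel)
                - complex_of_real (\<integral>\<theta>. exp (-((real n * c) * \<bar>\<theta>\<bar> powr \<beta>)) \<partial>lborel))
         \<le> C * real n powr (-(1/\<beta>) - e/(2*\<beta>))) sequentially"
proof -
  define \<gamma> where "\<gamma> = e / (2 * \<beta> * (\<beta> + e + 1))"
  define q where "q = \<gamma> - 1/\<beta>"
  define C where "C = 2 * B' + 4 * Gamma (1/\<beta>) / (\<beta> * (\<kappa>/2) powr (1/\<beta>))"
  have g0: "\<gamma> > 0" using b e by (simp add: \<gamma>_def)
  have q0: "q < 0"
  proof -
    have "e / (2 * (\<beta> + e + 1)) < 1" using b e by (simp add: field_simps)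
    hence "e / (2 * (\<beta> + e + 1)) * (1 / \<beta>) < 1 * (1 / \<beta>)" using b by (intro mult_strict_right_mono) auto
    moreover have "\<gamma> = e / (2 * (\<beta> + e + 1)) * (1 / \<beta>)" by (simp add: \<gamma>_def)
    ultimately show ?thesis by (simp add: q_def)
  qed
  have ev1: "eventually (\<lambda>n. real n powr q \<le> \<eta>) sequentially"
    by (rule ev_powr_small[OF q0 eta(1)])
  have ev2: "eventually (\<lambda>n. exp (-((\<kappa>/2) * real n powr (\<beta> * \<gamma>))) \<le> real n powr (-(e/(2*\<beta>)))) sequentially"
    using k b g0 by (intro ev_exp_small) auto
  have ev3: "eventually (\<lambda>n. n \<ge> (1::nat)) sequentially" by (rule eventually_ge_at_top)
  have "eventually (\<lambda>n. norm ((\<integral>\<theta>. indicator {-pi..pi} \<theta> *\<^sub>R \<phi> \<theta> ^ n \<partial>lborel)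
                - complex_of_real (\<integral>\<theta>. exp (-((real n * c) * \<bar>\<theta>\<bar> powr \<beta>)) \<partial>lborel))
         \<le> C * real n powr (-(1/\<beta>) - e/(2*\<beta>))) sequentially"
    using ev1 ev2 ev3
  proof eventually_elim
    case (elim n)
    define N where "N = real n"
    have N: "N \<ge> 1" using elim(3) by (simp add: N_def)
    define r where "r = N powr q"
    have r0: "r > 0" using N by (simp add: r_def)
    have rle: "r \<le> \<eta>" using elim(1) by (simp add: r_def N_def)
    note main = core_fixed_n[OF b c e k eta(2) B' elim(3) r0 rle \<phi>m bnd1 bnd2]
    have t1: "2 * r * (real n * B' * r powr (\<beta> + e)) = 2 * B' * N powr (-(1/\<beta>) - e/(2*\<beta>))"
    proof -
      have "r * r powr (\<beta> + e) = r powr (\<beta> + e + 1)" using r0 by (simp add: powr_add)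
      also have "\<dots> = N powr (q * (\<beta> + e + 1))" by (simp add: r_def powr_powr)
      finally have "N * (r * r powr (\<beta> + e)) = N powr (1 + q * (\<beta> + e + 1))"
        using N by (simp add: powr_add)
      also have "1 + q * (\<beta> + e + 1) = -(1/\<beta>) - e/(2*\<beta>)"
      proof -
        have h1: "\<gamma> * (\<beta> + e + 1) = e / (2*\<beta>)" using b e by (simp add: \<gamma>_def)
        have h2: "(\<beta> + e + 1) / \<beta> = 1 + e/\<beta> + 1/\<beta>" using b by (simp add: add_divide_distrib)
        have "1 + q * (\<beta> + e + 1) = 1 + \<gamma> * (\<beta> + e + 1) - (\<beta> + e + 1) / \<beta>"
          by (simp add: q_def algebra_simps add_divide_distrib)
        also have "\<dots> = 1 + e/(2*\<beta>) - (1 + e/\<beta> + 1/\<beta>)" by (simp only: h1 h2)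
        also have "\<dots> = -(1/\<beta>) - e/(2*\<beta>)" by (simp add: field_simps)
        finally show ?thesis .
      qed
      finally show ?thesis by (simp add: N_def algebra_simps)
    qed
    have Eeq: "exp (-((real n * \<kappa> / 2) * r powr \<beta>)) = exp (-((\<kappa>/2) * N powr (\<beta> * \<gamma>)))"
    proof -
      have "r powr \<beta> = N powr (q * \<beta>)" by (simp add: r_def powr_powr)
      hence "N * r powr \<beta> = N powr (1 + q * \<beta>)" using N by (simp add: powr_add)
      also have "1 + q * \<beta> = \<beta> * \<gamma>" using b by (simp add: q_def field_simps)
      finally show ?thesis by (simp add: N_def algebra_simps)
    qed
    have Gm: "(real n * \<kappa> / 2) powr (1/\<beta>) = N powr (1/\<beta>) * (\<kappa>/2) powr (1/\<beta>)"
      using N k by (simp add: N_def powr_mult[symmetric] mult.assoc)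
    have t2: "2 * exp (-((real n * \<kappa> / 2) * r powr \<beta>)) * (2 * Gamma (1/\<beta>) / (\<beta> * (real n * \<kappa> / 2) powr (1/\<beta>)))
        \<le> 4 * Gamma (1/\<beta>) / (\<beta> * (\<kappa>/2) powr (1/\<beta>)) * N powr (-(1/\<beta>) - e/(2*\<beta>))"
    proof -
      define G where "G = Gamma (1/\<beta>) / (\<beta> * (\<kappa>/2) powr (1/\<beta>))"
      have G0: "G \<ge> 0" using b k by (simp add: G_def Gamma_real_pos less_imp_le)
      have "2 * exp (-((real n * \<kappa> / 2) * r powr \<beta>)) * (2 * Gamma (1/\<beta>) / (\<beta> * (real n * \<kappa> / 2) powr (1/\<beta>)))
          = 4 * G * exp (-((\<kappa>/2) * N powr (\<beta> * \<gamma>))) * N powr (-(1/\<beta>))"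
        unfolding Eeq Gm using N b k by (simp add: G_def powr_minus field_simps)
      also have "\<dots> \<le> 4 * G * N powr (-(e/(2*\<beta>))) * N powr (-(1/\<beta>))"
        using elim(2) G0 by (intro mult_right_mono mult_left_mono) (auto simp: N_def)
      also have "\<dots> = 4 * G * N powr (-(1/\<beta>) - e/(2*\<beta>))"
        using N by (simp add: powr_add[symmetric] algebra_simps)
      finally show ?thesis by (simp add: G_def)
    qed
    have X: "C * real n powr (-(1/\<beta>) - e/(2*\<beta>)) = 2 * B' * N powr (-(1/\<beta>) - e/(2*\<beta>))
       + 4 * Gamma (1/\<beta>) / (\<beta> * (\<kappa>/2) powr (1/\<beta>)) * N powr (-(1/\<beta>) - e/(2*\<beta>))"
      by (simp add: C_def N_def algebra_simps)
    show ?case using main t2 unfolding t1 X by linarith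
  qed
  thus ?thesis by blast
qed

context lclt begin

lemma compact_bound:
  assumes A1: "\<And>y::int. int_subgroup_gen {y + k | k. measure M {\<omega>\<in>space M. X 0 \<omega> = k} > 0} = UNIV"
    and eta: "\<eta> > 0"
  shows "\<exists>\<rho><1. \<forall>\<theta>. \<eta> \<le> \<bar>\<theta>\<bar> \<and> \<bar>\<theta>\<bar> \<le> pi \<longrightarrow> norm (phi \<theta>) \<le> \<rho>"
proof -
  define S where "S = {-pi..-\<eta>} \<union> {\<eta>..pi}"
  have memS: "\<theta> \<in> S \<longleftrightarrow> \<eta> \<le> \<bar>\<theta>\<bar> \<and> \<bar>\<theta>\<bar> \<le> pi" for \<theta>
    using eta by (auto simp: S_def abs_if)
  show ?thesis
  proof (cases "S = {}")
    case True thus ?thesis using memS by (intro exI[of _ 0]) auto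
  next
    case False
    have "compact S" unfolding S_def by (intro compact_Un compact_Icc)
    moreover have "continuous_on S (\<lambda>\<theta>. norm (phi \<theta>))"
      by (intro continuous_at_imp_continuous_on ballI continuous_intros isCont_phi)
    ultimately obtain x where x: "x \<in> S" "\<forall>y\<in>S. norm (phi y) \<le> norm (phi x)"
      using continuous_attains_sup[of S "\<lambda>\<theta>. norm (phi \<theta>)"] False by blast
    have "norm (phi x) < 1" using x(1) memS[of x] eta by (intro phi_lt1[OF A1]) auto
    thus ?thesis using x(2) memS by blast
  qed
qed

lemma local_bounds:
  assumes A1: "\<And>y::int. int_subgroup_gen {y + k | k. measure M {\<omega>\<in>space M. X 0 \<omega> = k} > 0} = UNIV"
    and b: "0 < \<beta>" and c: "0 < c" and e: "0 < e" "e \<le> \<beta>" and eta0: "\<eta>0 > 0" and B: "B \<ge> 0"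
    and loc: "\<And>\<theta>. \<bar>\<theta>\<bar> < \<eta>0 \<Longrightarrow> norm (phi \<theta> - (1 - complex_of_real (c * \<bar>\<theta>\<bar> powr \<beta>))) \<le> B * \<bar>\<theta>\<bar> powr (\<beta> + e)"
  shows "\<exists>\<kappa> \<eta> B'. \<kappa> > 0 \<and> \<kappa> \<le> c \<and> \<eta> > 0 \<and> \<eta> \<le> 1 \<and> B' \<ge> 0 \<and>
     (\<forall>\<theta>. \<bar>\<theta>\<bar> \<le> pi \<longrightarrow> norm (phi \<theta>) \<le> 1 - \<kappa> * \<bar>\<theta>\<bar> powr \<beta>) \<and>
     (\<forall>\<theta>. \<bar>\<theta>\<bar> \<le> \<eta> \<longrightarrow> norm (phi \<theta> - exp (-(c * \<bar>\<theta>\<bar> powr \<beta>))) \<le> B' * \<bar>\<theta>\<bar> powr (\<beta> + e))"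
proof -
  define \<eta> where "\<eta> = min (\<eta>0/2) 1"
  define B' where "B' = B + c^2"
  have bnd2: "norm (phi \<theta> - exp (-(c * \<bar>\<theta>\<bar> powr \<beta>))) \<le> B' * \<bar>\<theta>\<bar> powr (\<beta> + e)" if t: "\<bar>\<theta>\<bar> \<le> \<eta>" for \<theta>
  proof -
    define x where "x = c * \<bar>\<theta>\<bar> powr \<beta>"
    have x0: "x \<ge> 0" using c by (simp add: x_def)
    have t0: "\<bar>\<theta>\<bar> < \<eta>0" "\<bar>\<theta>\<bar> \<le> 1" using t eta0 by (auto simp: \<eta>_def)
    have "norm (phi \<theta> - exp (-x)) \<le> norm (phi \<theta> - (1 - complex_of_real x)) + norm (complex_of_real ((1 - x) - exp (-x)))"
      using norm_triangle_ineq[of "phi \<theta> - (1 - complex_of_real x)" "complex_of_real ((1 - x) - exp (-x))"]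
      by (simp add: algebra_simps)
    also have "\<dots> \<le> B * \<bar>\<theta>\<bar> powr (\<beta> + e) + x^2"
    proof (intro add_mono)
      show "norm (phi \<theta> - (1 - complex_of_real x)) \<le> B * \<bar>\<theta>\<bar> powr (\<beta> + e)"
        using loc[OF t0(1)] by (simp add: x_def)
      show "norm (complex_of_real ((1 - x) - exp (-x))) \<le> x^2"
        unfolding norm_of_real using exp_quad[OF x0] by (simp add: abs_minus_commute)
    qed
    also have "x^2 \<le> c^2 * \<bar>\<theta>\<bar> powr (\<beta> + e)"
    proof -
      have "x^2 = c^2 * \<bar>\<theta>\<bar> powr (2*\<beta>)"
      proof -
        have "(\<bar>\<theta>\<bar> powr \<beta>)^2 = \<bar>\<theta>\<bar> powr (2*\<beta>)"
          by (metis powr_add power2_eq_square mult_2)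
        thus ?thesis by (simp add: x_def power_mult_distrib)
      qed
      also have "\<dots> \<le> c^2 * \<bar>\<theta>\<bar> powr (\<beta> + e)"
        using e t0 by (intro mult_left_mono powr_mono') auto
      finally show ?thesis .
    qed
    finally show ?thesis by (simp add: B'_def x_def algebra_simps)
  qed
  define \<eta>1 where "\<eta>1 = min (\<eta>0/2) (min ((1/c) powr (1/\<beta>)) ((c/(2*(B+1))) powr (1/e)))"
  have eta1: "\<eta>1 > 0" using eta0 c B by (simp add: \<eta>1_def)
  have near: "norm (phi \<theta>) \<le> 1 - (c/2) * \<bar>\<theta>\<bar> powr \<beta>" if t: "\<bar>\<theta>\<bar> \<le> \<eta>1" for \<theta>
  proof -
    have t0: "\<bar>\<theta>\<bar> < \<eta>0" using t eta0 by (simp add: \<eta>1_def)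
    have "\<bar>\<theta>\<bar> powr \<beta> \<le> ((1/c) powr (1/\<beta>)) powr \<beta>"
      using t b by (intro powr_mono2) (auto simp: \<eta>1_def)
    also have "\<dots> = 1/c" using b c by (simp add: powr_powr)
    finally have cx: "c * \<bar>\<theta>\<bar> powr \<beta> \<le> 1" using c by (simp add: field_simps)
    have "\<bar>\<theta>\<bar> powr e \<le> ((c/(2*(B+1))) powr (1/e)) powr e"
      using t e by (intro powr_mono2) (auto simp: \<eta>1_def)
    also have "\<dots> = c/(2*(B+1))" using e c B by (simp add: powr_powr)
    finally have te: "\<bar>\<theta>\<bar> powr e \<le> c/(2*(B+1))" .
    have "B * \<bar>\<theta>\<bar> powr e \<le> B * (c/(2*(B+1)))" using te B by (intro mult_left_mono) auto
    also have "\<dots> \<le> c/2" using B c by (simp add: field_simps)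
    finally have Be: "B * \<bar>\<theta>\<bar> powr e \<le> c/2" .
    have "norm (phi \<theta>) \<le> norm (1 - complex_of_real (c * \<bar>\<theta>\<bar> powr \<beta>)) + norm (phi \<theta> - (1 - complex_of_real (c * \<bar>\<theta>\<bar> powr \<beta>)))"
      by (rule norm_triangle_sub)
    also have "norm (1 - complex_of_real (c * \<bar>\<theta>\<bar> powr \<beta>)) = 1 - c * \<bar>\<theta>\<bar> powr \<beta>"
    proof -
      have "1 - complex_of_real (c * \<bar>\<theta>\<bar> powr \<beta>) = complex_of_real (1 - c * \<bar>\<theta>\<bar> powr \<beta>)" by simp
      thus ?thesis using cx by (simp only: norm_of_real)
    qed
    also have "norm (phi \<theta> - (1 - complex_of_real (c * \<bar>\<theta>\<bar> powr \<beta>))) \<le> B * \<bar>\<theta>\<bar> powr (\<beta> + e)"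
      by (rule loc[OF t0])
    also have "B * \<bar>\<theta>\<bar> powr (\<beta> + e) = (B * \<bar>\<theta>\<bar> powr e) * \<bar>\<theta>\<bar> powr \<beta>"
      unfolding powr_add by (simp only: mult_ac)
    also have "\<dots> \<le> (c/2) * \<bar>\<theta>\<bar> powr \<beta>" using Be by (intro mult_right_mono) auto
    finally show ?thesis by simp
  qed
  obtain \<rho> where \<rho>: "\<rho> < 1" "\<And>\<theta>. \<eta>1 \<le> \<bar>\<theta>\<bar> \<Longrightarrow> \<bar>\<theta>\<bar> \<le> pi \<Longrightarrow> norm (phi \<theta>) \<le> \<rho>"
    using compact_bound[OF A1 eta1] by blast
  define \<kappa> where "\<kappa> = min (c/2) ((1 - \<rho>) / pi powr \<beta>)"
  have k0: "\<kappa> > 0" using c \<rho>(1) by (simp add: \<kappa>_def)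
  have bnd1: "norm (phi \<theta>) \<le> 1 - \<kappa> * \<bar>\<theta>\<bar> powr \<beta>" if t: "\<bar>\<theta>\<bar> \<le> pi" for \<theta>
  proof (cases "\<bar>\<theta>\<bar> \<le> \<eta>1")
    case True
    have "\<kappa> \<le> c/2" unfolding \<kappa>_def by (rule min.cobounded1)
    hence "\<kappa> * \<bar>\<theta>\<bar> powr \<beta> \<le> (c/2) * \<bar>\<theta>\<bar> powr \<beta>" by (intro mult_right_mono) auto
    thus ?thesis using near[OF True] by simp
  next
    case False
    have "\<kappa> * \<bar>\<theta>\<bar> powr \<beta> \<le> ((1 - \<rho>) / pi powr \<beta>) * pi powr \<beta>"
      using t b k0 by (intro mult_mono powr_mono2) (auto simp: \<kappa>_def)
    also have "\<dots> = 1 - \<rho>" by simp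
    finally show ?thesis using \<rho>(2)[of \<theta>] False t by simp
  qed
  show ?thesis
    apply (rule exI[of _ \<kappa>], rule exI[of _ \<eta>], rule exI[of _ B'])
    using k0 eta0 B c bnd1 bnd2 by (auto simp: \<kappa>_def \<eta>_def B'_def)
qed

end

lemma final_alg:
  fixes N \<beta> c P C d Gm :: real
  assumes N: "N > 0" and b: "\<beta> > 0" and c: "c > 0"
    and h: "\<bar>2*pi*P - 2 * Gm / (\<beta> * (N * c) powr (1/\<beta>))\<bar> \<le> C * N powr (-(1/\<beta>) - d)"
  shows "\<bar>N powr (1/\<beta>) * P - Gm / (\<beta> * c powr (1/\<beta>) * pi)\<bar> \<le> C / (2*pi) * N powr (-d)"
proof -
  define u where "u = N powr (1/\<beta>)"
  define v where "v = c powr (1/\<beta>)"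
  have u: "u > 0" using N by (simp add: u_def)
  have v: "v > 0" using c by (simp add: v_def)
  have m: "(N * c) powr (1/\<beta>) = u * v" using N c by (simp add: u_def v_def powr_mult)
  have p: "N powr (-(1/\<beta>) - d) = N powr (-d) / u"
    using N by (simp add: u_def powr_diff powr_minus divide_inverse algebra_simps powr_add[symmetric])
  have "N powr (1/\<beta>) * P - Gm / (\<beta> * c powr (1/\<beta>) * pi) = u / (2*pi) * (2*pi*P - 2 * Gm / (\<beta> * (u * v)))"
    using u v b by (simp add: u_def v_def field_simps)
  hence "\<bar>N powr (1/\<beta>) * P - Gm / (\<beta> * c powr (1/\<beta>) * pi)\<bar> = u / (2*pi) * \<bar>2*pi*P - 2 * Gm / (\<beta> * (N * c) powr (1/\<beta>))\<bar>"
    using u by (simp add: m abs_mult)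
  also have "\<dots> \<le> u / (2*pi) * (C * N powr (-(1/\<beta>) - d))"
    using h u by (intro mult_left_mono) auto
  also have "\<dots> = C / (2*pi) * N powr (-d)" using u by (simp add: p field_simps)
  finally show ?thesis .
qed

theorem corollary5:
  fixes M :: "'a measure" and X :: "nat \<Rightarrow> 'a \<Rightarrow> int"
    and \<beta> c_star \<epsilon> :: real
  assumes "prob_space M"
    and "\<And>i. X i \<in> measurable M (count_space UNIV)"
    and "prob_space.indep_vars M (\<lambda>_. count_space UNIV) X UNIV"
    and "\<And>i. distr M (count_space UNIV) (X i) = distr M (count_space UNIV) (X 0)"
    and A1: "\<And>y::int. int_subgroup_gen {y + k | k. measure M {\<omega>\<in>space M. X 0 \<omega> = k} > 0} = UNIV"
    and A3: "0 < \<beta>" "\<beta> \<le> 2" "0 < c_star" "0 < \<epsilon>"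
      "(\<lambda>\<theta>. charfn M (X 0) \<theta> - (1 - complex_of_real (c_star * \<bar>\<theta>\<bar> powr \<beta>)))
         \<in> O[at 0](\<lambda>\<theta>. complex_of_real (\<bar>\<theta>\<bar> powr (\<beta> + \<epsilon>)))"
  shows "\<exists>C3 > 0. \<exists>N3::nat. \<forall>n\<ge>N3.
     \<bar>real n powr (1 / \<beta>) * measure M {\<omega>\<in>space M. (\<Sum>j<n. X j \<omega>) = 0}
       - Gamma (1 / \<beta>) / (\<beta> * c_star powr (1 / \<beta>) * pi)\<bar>
     \<le> C3 * real n powr (- min (\<epsilon> / (2 * \<beta>)) (1 / 2))"
proof -
  interpret L: lclt M X using assms(1-4) by (simp add: lclt_def lclt_axioms_def)
  note b = A3(1) and c = A3(3) and eps = A3(4)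
  have bo: "(\<lambda>\<theta>. L.phi \<theta> - (1 - complex_of_real (c_star * \<bar>\<theta>\<bar> powr \<beta>)))
         \<in> O[at 0](\<lambda>\<theta>. complex_of_real (\<bar>\<theta>\<bar> powr (\<beta> + \<epsilon>)))"
    using A3(5) unfolding L.charfn_phi .
  obtain K where K: "K > 0" "eventually (\<lambda>\<theta>. norm (L.phi \<theta> - (1 - complex_of_real (c_star * \<bar>\<theta>\<bar> powr \<beta>)))
       \<le> K * norm (complex_of_real (\<bar>\<theta>\<bar> powr (\<beta> + \<epsilon>)))) (at 0)"
    using landau_o.bigE[OF bo] by blast
  then obtain d where d: "d > 0" "\<And>\<theta>. \<theta> \<noteq> 0 \<Longrightarrow> dist \<theta> 0 < d \<Longrightarrow>
      norm (L.phi \<theta> - (1 - complex_of_real (c_star * \<bar>\<theta>\<bar> powr \<beta>))) \<le> K * norm (complex_of_real (\<bar>\<theta>\<bar> powr (\<beta> + \<epsilon>)))"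
    unfolding eventually_at by auto
  define e where "e = min \<epsilon> \<beta>"
  have e0: "e > 0" "e \<le> \<beta>" "e \<le> \<epsilon>" using b eps by (auto simp: e_def)
  define \<eta>0 where "\<eta>0 = min d 1"
  have eta0: "\<eta>0 > 0" using d by (simp add: \<eta>0_def)
  have loc: "norm (L.phi \<theta> - (1 - complex_of_real (c_star * \<bar>\<theta>\<bar> powr \<beta>))) \<le> K * \<bar>\<theta>\<bar> powr (\<beta> + e)"
    if t: "\<bar>\<theta>\<bar> < \<eta>0" for \<theta>
  proof (cases "\<theta> = 0")
    case True thus ?thesis using b K by (simp add: L.phi_0)
  next
    case False
    have "norm (L.phi \<theta> - (1 - complex_of_real (c_star * \<bar>\<theta>\<bar> powr \<beta>))) \<le> K * \<bar>\<theta>\<bar> powr (\<beta> + \<epsilon>)"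
      using d(2)[OF False] t by (simp add: \<eta>0_def)
    also have "\<dots> \<le> K * \<bar>\<theta>\<bar> powr (\<beta> + e)"
      using K t e0 by (intro mult_left_mono powr_mono') (auto simp: \<eta>0_def)
    finally show ?thesis .
  qed
  obtain \<kappa> \<eta> B' where kb: "\<kappa> > 0" "\<kappa> \<le> c_star" "\<eta> > 0" "\<eta> \<le> 1" "B' \<ge> 0"
     "\<And>\<theta>. \<bar>\<theta>\<bar> \<le> pi \<Longrightarrow> norm (L.phi \<theta>) \<le> 1 - \<kappa> * \<bar>\<theta>\<bar> powr \<beta>"
     "\<And>\<theta>. \<bar>\<theta>\<bar> \<le> \<eta> \<Longrightarrow> norm (L.phi \<theta> - exp (-(c_star * \<bar>\<theta>\<bar> powr \<beta>))) \<le> B' * \<bar>\<theta>\<bar> powr (\<beta> + e)"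
    using L.local_bounds[OF A1 b c e0(1,2) eta0 less_imp_le[OF K(1)] loc] by blast
  obtain C where C: "eventually (\<lambda>n. norm ((\<integral>\<theta>. indicator {-pi..pi} \<theta> *\<^sub>R L.phi \<theta> ^ n \<partial>lborel)
                - complex_of_real (\<integral>\<theta>. exp (-((real n * c_star) * \<bar>\<theta>\<bar> powr \<beta>)) \<partial>lborel))
         \<le> C * real n powr (-(1/\<beta>) - e/(2*\<beta>))) sequentially"
    using core_asymp[OF b c e0(1) kb(1,2) kb(3,4) kb(5) L.phi_meas kb(6) kb(7)] by blast
  have de: "min (\<epsilon> / (2 * \<beta>)) (1 / 2) = e / (2*\<beta>)"
    using b eps by (auto simp: e_def min_def field_simps)
  have ev: "eventually (\<lambda>n. \<bar>real n powr (1 / \<beta>) * measure M {\<omega>\<in>space M. (\<Sum>j<n. X j \<omega>) = 0}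
       - Gamma (1 / \<beta>) / (\<beta> * c_star powr (1 / \<beta>) * pi)\<bar>
     \<le> C / (2*pi) * real n powr (- (e / (2*\<beta>)))) sequentially"
    using C eventually_ge_at_top[of "1::nat"]
  proof eventually_elim
    case (elim n)
    define P where "P = measure M {\<omega>\<in>space M. (\<Sum>j<n. X j \<omega>) = 0}"
    have nc: "real n * c_star > 0" using elim(2) c by simp
    have G: "(\<integral>\<theta>. exp (-((real n * c_star) * \<bar>\<theta>\<bar> powr \<beta>)) \<partial>lborel)
        = 2 * Gamma (1/\<beta>) / (\<beta> * (real n * c_star) powr (1/\<beta>))"
      by (rule stretched_exp_lborel(2)[OF nc b])
    have T: "(\<integral>\<theta>. indicator {-pi..pi} \<theta> *\<^sub>R L.phi \<theta> ^ n \<partial>lborel) = complex_of_real (2*pi*P)"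
      using L.fourier[of n] by (simp add: P_def L.Ssum_def)
    have "\<bar>2*pi*P - 2 * Gamma (1/\<beta>) / (\<beta> * (real n * c_star) powr (1/\<beta>))\<bar>
        \<le> C * real n powr (-(1/\<beta>) - e/(2*\<beta>))"
      using elim(1) unfolding T G of_real_diff[symmetric] norm_of_real .
    from final_alg[OF _ b c this] elim(2) show ?case by (simp add: P_def)
  qed
  then obtain N3 where N3: "\<And>n. n \<ge> N3 \<Longrightarrow> \<bar>real n powr (1 / \<beta>) * measure M {\<omega>\<in>space M. (\<Sum>j<n. X j \<omega>) = 0}
       - Gamma (1 / \<beta>) / (\<beta> * c_star powr (1 / \<beta>) * pi)\<bar>
     \<le> C / (2*pi) * real n powr (- (e / (2*\<beta>)))"
    unfolding eventually_sequentially by blast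
  show ?thesis
  proof (intro exI[of _ "max (C / (2*pi)) 1"] conjI exI[of _ N3] allI impI)
    show "max (C / (2*pi)) 1 > 0" by simp
    fix n assume n: "n \<ge> N3"
    have "C / (2*pi) * real n powr (- (e / (2*\<beta>))) \<le> max (C / (2*pi)) 1 * real n powr (- (e / (2*\<beta>)))"
      by (intro mult_right_mono) auto
    thus "\<bar>real n powr (1 / \<beta>) * measure M {\<omega>\<in>space M. (\<Sum>j<n. X j \<omega>) = 0}
       - Gamma (1 / \<beta>) / (\<beta> * c_star powr (1 / \<beta>) * pi)\<bar>
     \<le> max (C / (2*pi)) 1 * real n powr (- min (\<epsilon> / (2 * \<beta>)) (1 / 2))"
      using N3[OF n] unfolding de by linarith
  qed
qed

end
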